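(* Let $(X,\mu)$ and $(Y,\nu)$ be probability spaces and $R$ a measure on $X\times Y$. For $\phi\colon Y\to\mathbb{R}$ let $$\phi^+(x)=\ln\Big(\int_Y e^{\phi(y)}\,R(dx,dy)/\mu(dx)\Big)$$ (a Radon--Nikodym derivative, assumed well-defined). Let $F(\phi)=\int_X\phi^+\,d\mu$, let $F^*$ be its convex conjugate, and let $H_\nu(\rho)=H(\rho|\nu)=\int\ln(\rho/\nu)\,d\rho$. Then for all probability measures $\rho,\widetilde\rho$ on $Y$, $$H_\nu(\widetilde\rho|\rho)\le F^*(\widetilde\rho|\rho).$$
   Context: For a differentiable convex functional $G$, its Bregman divergence is $$G(a|b)=G(a)-G(b)-\langle G'(b),a-b\rangle,$$ where $G'$ is the derivative (first variation) and $\langle\cdot,\cdot\rangle$ is the pairing between functions and measures on $Y$, $\langle\phi,\rho\rangle=\int\phi\,d\rho$. The convex conjugate is $F^*(\rho)=\sup_\phi\langle\phi,\rho\rangle-F(\phi)$. The derivative $F'(\phi)$ is the $Y$-marginal of $e^{\phi(y)-\phi^+(x)}R(dx,dy)$, and $(F^* )'$ inverts $F'$. *)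

theory Defs
  imports "HOL-Probability.Probability"
begin

definition bregman :: "('a measure \<Rightarrow> ereal) \<Rightarrow> ('a measure \<Rightarrow> 'a \<Rightarrow> real)
    \<Rightarrow> 'a measure \<Rightarrow> 'a measure \<Rightarrow> ereal" where
  "bregman G G' a b = G a - G b - ereal ((\<integral>y. G' b y \<partial>a) - (\<integral>y. G' b y \<partial>b))"

definition rel_entropy :: "'b measure \<Rightarrow> 'b measure \<Rightarrow> ereal" where
  "rel_entropy \<nu> \<rho> =
     (if absolutely_continuous \<nu> \<rho> \<and> integrable \<rho> (\<lambda>y. ln (enn2real (RN_deriv \<nu> \<rho> y)))
      then ereal (\<integral>y. ln (enn2real (RN_deriv \<nu> \<rho> y)) \<partial>\<rho>) else \<infinity>)"

definition rel_entropy_deriv :: "'b measure \<Rightarrow> 'b measure \<Rightarrow> 'b \<Rightarrow> real" where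
  "rel_entropy_deriv \<nu> \<rho> y = ln (enn2real (RN_deriv \<nu> \<rho> y)) + 1"

definition margX :: "('a \<times> 'b) measure \<Rightarrow> 'a measure \<Rightarrow> ('b \<Rightarrow> real) \<Rightarrow> 'a measure" where
  "margX R \<mu> \<phi> = distr (density R (\<lambda>(x,y). ennreal (exp (\<phi> y)))) \<mu> fst"

text \<open>phi^+ is well-defined: the marginal has a (strictly positive, finite) density
  e^{f} w.r.t. mu.\<close>
definition phi_plus_wd :: "('a \<times> 'b) measure \<Rightarrow> 'a measure \<Rightarrow> ('b \<Rightarrow> real) \<Rightarrow> bool" where
  "phi_plus_wd R \<mu> \<phi> \<longleftrightarrow>
     (\<exists>f \<in> borel_measurable \<mu>. margX R \<mu> \<phi> = density \<mu> (\<lambda>x. ennreal (exp (f x))))"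

definition phi_plus :: "('a \<times> 'b) measure \<Rightarrow> 'a measure \<Rightarrow> ('b \<Rightarrow> real) \<Rightarrow> 'a \<Rightarrow> real" where
  "phi_plus R \<mu> \<phi> x = ln (enn2real (RN_deriv \<mu> (margX R \<mu> \<phi>) x))"

definition Ffun :: "('a \<times> 'b) measure \<Rightarrow> 'a measure \<Rightarrow> ('b \<Rightarrow> real) \<Rightarrow> real" where
  "Ffun R \<mu> \<phi> = (\<integral>x. phi_plus R \<mu> \<phi> x \<partial>\<mu>)"

definition Fdom :: "('a \<times> 'b) measure \<Rightarrow> 'a measure \<Rightarrow> 'b measure \<Rightarrow> ('b \<Rightarrow> real) \<Rightarrow> bool" where
  "Fdom R \<mu> \<nu> \<phi> \<longleftrightarrow> \<phi> \<in> borel_measurable \<nu> \<and> phi_plus_wd R \<mu> \<phi>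
      \<and> integrable \<mu> (phi_plus R \<mu> \<phi>)"

definition Fstar :: "('a \<times> 'b) measure \<Rightarrow> 'a measure \<Rightarrow> 'b measure \<Rightarrow> 'b measure \<Rightarrow> ereal" where
  "Fstar R \<mu> \<nu> \<rho> = (SUP \<phi> \<in> {\<phi>. Fdom R \<mu> \<nu> \<phi> \<and> integrable \<rho> \<phi>}.
       ereal ((\<integral>y. \<phi> y \<partial>\<rho>) - Ffun R \<mu> \<phi>))"

definition Fderiv :: "('a \<times> 'b) measure \<Rightarrow> 'a measure \<Rightarrow> 'b measure \<Rightarrow> ('b \<Rightarrow> real) \<Rightarrow> 'b measure" where
  "Fderiv R \<mu> \<nu> \<phi> =
     distr (density R (\<lambda>(x,y). ennreal (exp (\<phi> y - phi_plus R \<mu> \<phi> x)))) \<nu> snd"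

text \<open>(F^*)' inverts F'.\<close>
definition Fstar_deriv :: "('a \<times> 'b) measure \<Rightarrow> 'a measure \<Rightarrow> 'b measure \<Rightarrow> 'b measure \<Rightarrow> 'b \<Rightarrow> real" where
  "Fstar_deriv R \<mu> \<nu> \<rho> =
     (SOME \<phi>. Fdom R \<mu> \<nu> \<phi> \<and> integrable \<rho> \<phi> \<and> Fderiv R \<mu> \<nu> \<phi> = \<rho>)"

end

theory Submission imports Defs begin

lemma phi_plus_ae:
  assumes mu: "prob_space \<mu>" and wd: "phi_plus_wd R \<mu> \<psi>"
  obtains f where "f \<in> borel_measurable \<mu>"
    "margX R \<mu> \<psi> = density \<mu> (\<lambda>x. ennreal (exp (f x)))"
    "AE x in \<mu>. phi_plus R \<mu> \<psi> x = f x"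
proof -
  interpret prob_space \<mu> by fact
  obtain f where f: "f \<in> borel_measurable \<mu>" and eq: "margX R \<mu> \<psi> = density \<mu> (\<lambda>x. ennreal (exp (f x)))"
    using wd unfolding phi_plus_wd_def by blast
  have "AE x in \<mu>. ennreal (exp (f x)) = RN_deriv \<mu> (margX R \<mu> \<psi>) x"
    unfolding eq by (rule RN_deriv_unique) (use f in auto)
  then have "AE x in \<mu>. phi_plus R \<mu> \<psi> x = f x"
    by eventually_elim (metis enn2real_ennreal exp_ge_zero ln_exp phi_plus_def)
  with f eq show ?thesis using that by blast
qed

lemma phi_plus_meas[measurable]: "phi_plus R \<mu> \<psi> \<in> borel_measurable \<mu>"
  unfolding phi_plus_def[abs_def] by measurable

lemma phi_plus_ae2:
  assumes mu: "prob_space \<mu>" and f: "f \<in> borel_measurable \<mu>"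
    and eq: "margX R \<mu> \<psi> = density \<mu> (\<lambda>x. ennreal (exp (f x)))"
  shows "AE x in \<mu>. phi_plus R \<mu> \<psi> x = f x"
proof -
  interpret prob_space \<mu> by fact
  have "AE x in \<mu>. ennreal (exp (f x)) = RN_deriv \<mu> (margX R \<mu> \<psi>) x"
    unfolding eq by (rule RN_deriv_unique) (use f in auto)
  then show "AE x in \<mu>. phi_plus R \<mu> \<psi> x = f x"
    by eventually_elim (metis enn2real_ennreal exp_ge_zero ln_exp phi_plus_def)
qed

lemma ae_le_of_dens:
  assumes fin: "finite_measure M" and k[measurable]: "k \<in> borel_measurable M"
    and le: "\<And>A. A \<in> sets M \<Longrightarrow> emeasure (density M k) A \<le> ennreal b * emeasure M A"
  shows "AE x in M. k x \<le> ennreal b"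
proof (rule ccontr)
  assume nae: "\<not> (AE x in M. k x \<le> ennreal b)"
  define B where "B = {x\<in>space M. ennreal b < k x}"
  have B[measurable]: "B \<in> sets M" unfolding B_def by measurable
  have "(\<integral>\<^sup>+x. ennreal b * indicator B x \<partial>M) < (\<integral>\<^sup>+x. k x * indicator B x \<partial>M)"
  proof (rule nn_integral_less)
    show "(\<integral>\<^sup>+x. ennreal b * indicator B x \<partial>M) \<noteq> \<infinity>"
      using finite_measure.emeasure_finite[OF fin, of B] by (simp add: nn_integral_cmult_indicator ennreal_mult_eq_top_iff)
    show "AE x in M. ennreal b * indicator B x \<le> k x * indicator B x"
      by (auto simp: B_def indicator_def less_imp_le)
    show "\<not> (AE x in M. k x * indicator B x \<le> ennreal b * indicator B x)"
    proof
      assume "AE x in M. k x * indicator B x \<le> ennreal b * indicator B x"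
      then have "AE x in M. k x \<le> ennreal b" using AE_space
      proof eventually_elim
        case (elim x) then show ?case by (cases "ennreal b < k x") (auto simp: B_def not_less)
      qed
      with nae show False by simp
    qed
  qed auto
  also have "\<dots> = emeasure (density M k) B" by (simp add: emeasure_density)
  also have "\<dots> \<le> ennreal b * emeasure M B" by (rule le[OF B])
  also have "\<dots> = (\<integral>\<^sup>+x. ennreal b * indicator B x \<partial>M)" by (simp add: nn_integral_cmult_indicator)
  finally show False by simp
qed

lemma ae_ge_of_dens:
  assumes fin: "finite_measure M" and k[measurable]: "k \<in> borel_measurable M"
    and ge: "\<And>A. A \<in> sets M \<Longrightarrow> ennreal b * emeasure M A \<le> emeasure (density M k) A"
  shows "AE x in M. ennreal b \<le> k x"
proof (rule ccontr)
  assume nae: "\<not> (AE x in M. ennreal b \<le> k x)"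
  define B where "B = {x\<in>space M. k x < ennreal b}"
  have B[measurable]: "B \<in> sets M" unfolding B_def by measurable
  have fb: "(\<integral>\<^sup>+x. ennreal b * indicator B x \<partial>M) \<noteq> \<infinity>"
      using finite_measure.emeasure_finite[OF fin, of B] by (simp add: nn_integral_cmult_indicator ennreal_mult_eq_top_iff)
  have "(\<integral>\<^sup>+x. k x * indicator B x \<partial>M) < (\<integral>\<^sup>+x. ennreal b * indicator B x \<partial>M)"
  proof (rule nn_integral_less)
    show "(\<integral>\<^sup>+x. k x * indicator B x \<partial>M) \<noteq> \<infinity>"
    proof -
      have "(\<integral>\<^sup>+x. k x * indicator B x \<partial>M) \<le> (\<integral>\<^sup>+x. ennreal b * indicator B x \<partial>M)"
        by (rule nn_integral_mono) (auto simp: B_def indicator_def less_imp_le)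
      with fb show ?thesis by (auto simp: top_unique)
    qed
    show "AE x in M. k x * indicator B x \<le> ennreal b * indicator B x"
      by (auto simp: B_def indicator_def less_imp_le)
    show "\<not> (AE x in M. ennreal b * indicator B x \<le> k x * indicator B x)"
    proof
      assume "AE x in M. ennreal b * indicator B x \<le> k x * indicator B x"
      then have "AE x in M. ennreal b \<le> k x" using AE_space
      proof eventually_elim
        case (elim x) then show ?case by (cases "k x < ennreal b") (auto simp: B_def not_less)
      qed
      with nae show False by simp
    qed
  qed auto
  also have "\<dots> = ennreal b * emeasure M B" by (simp add: nn_integral_cmult_indicator)
  also have "\<dots> \<le> emeasure (density M k) B" by (rule ge[OF B])
  also have "\<dots> = (\<integral>\<^sup>+x. k x * indicator B x \<partial>M)" by (simp add: emeasure_density)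
  finally show False by simp
qed

lemma ereal_aux1: "ereal (a + b) \<le> F \<Longrightarrow> ereal b \<le> F - ereal a"
  by (cases F) auto

lemma ereal_aux2: "X - ereal E - ereal ((L + 1) - (E + 1)) = X - ereal L"
  by (cases X) auto

lemma ereal_aux3: "F - ereal (B - f) - ereal (A - B) = F - ereal (A - f)"
  by (cases F) auto

lemma dens_real:
  assumes nu: "prob_space \<nu>" and rho: "prob_space \<rho>" and s: "sets \<rho> = sets \<nu>"
    and ac: "absolutely_continuous \<nu> \<rho>"
  shows "\<rho> = density \<nu> (\<lambda>y. ennreal (enn2real (RN_deriv \<nu> \<rho> y)))"
proof -
  interpret N: prob_space \<nu> by fact
  interpret P: prob_space \<rho> by fact
  have "\<rho> = density \<nu> (RN_deriv \<nu> \<rho>)" by (rule N.density_RN_deriv[OF ac s, symmetric])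
  also have "\<dots> = density \<nu> (\<lambda>y. ennreal (enn2real (RN_deriv \<nu> \<rho> y)))"
  proof (rule density_cong)
    show "AE x in \<nu>. RN_deriv \<nu> \<rho> x = ennreal (enn2real (RN_deriv \<nu> \<rho> x))"
      using N.RN_deriv_finite[OF P.sigma_finite_measure_axioms ac s]
      by eventually_elim (simp add: ennreal_enn2real_if)
  qed auto
  finally show ?thesis .
qed

lemma xlnx_bound: "0 \<le> (x::real) \<Longrightarrow> x * max 0 (- ln x) \<le> 1"
proof -
  assume x: "0 \<le> x"
  show ?thesis
  proof (cases "x = 0 \<or> 1 \<le> x")
    case True then show ?thesis by auto
  next
    case False
    then have x0: "0 < x" "x < 1" using x by auto
    have "ln (1 / x) \<le> 1 / x - 1" by (rule ln_le_minus_one) (use x0 in auto)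
    then have "- ln x \<le> 1 / x - 1" using x0 by (simp add: ln_div)
    then have "x * (- ln x) \<le> x * (1 / x - 1)" using x0 by (intro mult_left_mono) auto
    also have "\<dots> = 1 - x" using x0 by (simp add: field_simps)
    finally show ?thesis using x0 by (auto simp: max_def)
  qed
qed

lemma dv:
  fixes \<nu> \<rho> \<rho>' :: "'b measure" and T :: ereal
  assumes nu: "prob_space \<nu>" and rho: "prob_space \<rho>" and srho: "sets \<rho> = sets \<nu>"
    and rho': "prob_space \<rho>'" and srho': "sets \<rho>' = sets \<nu>"
    and ac: "absolutely_continuous \<nu> \<rho>" and pos: "AE y in \<nu>. 0 < RN_deriv \<nu> \<rho> y"
    and ilp: "integrable \<rho>' (\<lambda>y. ln (enn2real (RN_deriv \<nu> \<rho> y)))"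
    and DV: "\<And>g c. g \<in> borel_measurable \<nu> \<Longrightarrow> (\<And>y. \<bar>g y\<bar> \<le> c) \<Longrightarrow>
       ereal ((\<integral>y. g y \<partial>\<rho>') - ln (\<integral>y. exp (g y) \<partial>\<rho>)) \<le> T"
  shows "rel_entropy \<nu> \<rho>' - ereal (\<integral>y. ln (enn2real (RN_deriv \<nu> \<rho> y)) \<partial>\<rho>') \<le> T"
proof -
  interpret N: prob_space \<nu> by fact
  interpret P: prob_space \<rho> by fact
  interpret P': prob_space \<rho>' by fact
  have mr[measurable]: "measurable \<rho> M = measurable \<nu> M" for M :: "'c measure"
    by (rule measurable_cong_sets[OF srho refl])
  have mr'[measurable]: "measurable \<rho>' M = measurable \<nu> M" for M :: "'c measure"
    by (rule measurable_cong_sets[OF srho' refl])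
  have T0: "0 \<le> T"
    using DV[of "\<lambda>_. 0" 0] by (simp add: P.prob_space zero_ereal_def)
  show ?thesis
  proof (cases T)
    case PInf then show ?thesis by simp
  next
    case MInf then show ?thesis using T0 by simp
  next
    case (real t)
    have DVt: "(\<integral>y. g y \<partial>\<rho>') - ln (\<integral>y. exp (g y) \<partial>\<rho>) \<le> t"
      if "g \<in> borel_measurable \<nu>" "\<And>y. \<bar>g y\<bar> \<le> c" for g c
      using DV[OF that] real by simp
    have ac': "absolutely_continuous \<nu> \<rho>'"
    proof (rule ccontr)
      assume "\<not> absolutely_continuous \<nu> \<rho>'"
      then obtain A where A: "A \<in> null_sets \<nu>" "A \<notin> null_sets \<rho>'"
        unfolding absolutely_continuous_def by auto
      have As[measurable]: "A \<in> sets \<nu>" using A by auto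
      have "A \<in> null_sets \<rho>" using ac A unfolding absolutely_continuous_def by auto
      then have aeA: "AE y in \<rho>. y \<notin> A" by (rule AE_not_in)
      define r where "r = measure \<rho>' A"
      have r: "0 < r" using A srho' unfolding r_def
        by (metis P'.emeasure_eq_measure As ennreal_0 null_setsI zero_less_measure_iff)
      obtain n :: nat where n: "t < real n * r" using reals_Archimedean3[OF r] by blast
      have d: "(\<integral>y. real n * indicator A y \<partial>\<rho>') - ln (\<integral>y. exp (real n * indicator A y) \<partial>\<rho>) \<le> t"
        by (rule DVt[of _ "real n"]) (auto simp: indicator_def)
      have "AE y in \<rho>. exp (real n * indicator A y) = 1" using aeA by eventually_elim simp
      then have "(\<integral>y. exp (real n * indicator A y) \<partial>\<rho>) = (\<integral>y. 1 \<partial>\<rho>)"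
        by (rule integral_cong_AE[rotated 2]) (unfold mr, measurable)+
      then have i2: "(\<integral>y. exp (real n * indicator A y) \<partial>\<rho>) = 1" by (simp add: P.prob_space)
      have "A \<inter> space \<rho>' = A" using As srho' sets.sets_into_space by blast
      then have i1: "(\<integral>y. real n * indicator A y \<partial>\<rho>') = real n * r" unfolding r_def by simp
      have "real n * r - ln 1 \<le> t" using d unfolding i1 i2 .
      then show False using n by simp
    qed
    define p where "p y = enn2real (RN_deriv \<nu> \<rho> y)" for y
    define p' where "p' y = enn2real (RN_deriv \<nu> \<rho>' y)" for y
    have pm[measurable]: "p \<in> borel_measurable \<nu>" unfolding p_def[abs_def] by measurable
    have p'm[measurable]: "p' \<in> borel_measurable \<nu>" unfolding p'_def[abs_def] by measurable
    have p_nn: "0 \<le> p y" for y by (simp add: p_def)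
    have p'_nn: "0 \<le> p' y" for y by (simp add: p'_def)
    have rhoD: "\<rho> = density \<nu> (\<lambda>y. ennreal (p y))"
      using dens_real[OF nu rho srho ac] unfolding p_def .
    have rho'D: "\<rho>' = density \<nu> (\<lambda>y. ennreal (p' y))"
      using dens_real[OF nu rho' srho' ac'] unfolding p'_def .
    have ppos: "AE y in \<nu>. 0 < p y"
      using pos N.RN_deriv_finite[OF P.sigma_finite_measure_axioms ac srho]
      by eventually_elim (auto simp: p_def enn2real_positive_iff top.not_eq_extremum)
    have p'pos: "AE y in \<rho>'. 0 < p' y"
      by (subst rho'D, subst AE_density) auto
    have ppos': "AE y in \<rho>'. 0 < p y"
      by (rule absolutely_continuous_AE[OF srho' ac' ppos])
    have intrho: "(\<integral>y. f y \<partial>\<rho>) = (\<integral>y. p y * f y \<partial>\<nu>)" if [measurable]: "f \<in> borel_measurable \<nu>" for f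
      by (subst rhoD) (simp add: integral_density p_nn)
    have intrho': "(\<integral>y. f y \<partial>\<rho>') = (\<integral>y. p' y * f y \<partial>\<nu>)" if [measurable]: "f \<in> borel_measurable \<nu>" for f
      by (subst rho'D) (simp add: integral_density p'_nn)
    have irho: "integrable \<rho> f \<longleftrightarrow> integrable \<nu> (\<lambda>y. p y * f y)" if [measurable]: "f \<in> borel_measurable \<nu>" for f :: "'b \<Rightarrow> real"
      by (subst rhoD) (simp add: integrable_density p_nn)
    have irho': "integrable \<rho>' f \<longleftrightarrow> integrable \<nu> (\<lambda>y. p' y * f y)" if [measurable]: "f \<in> borel_measurable \<nu>" for f :: "'b \<Rightarrow> real"
      by (subst rho'D) (simp add: integrable_density p'_nn)
    have ip: "integrable \<nu> p" using irho[of "\<lambda>_. 1"] by simp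
    have ip': "integrable \<nu> p'" using irho'[of "\<lambda>_. 1"] by simp
    have Ip: "(\<integral>y. p y \<partial>\<nu>) = 1" using intrho[of "\<lambda>_. 1"] by (simp add: P.prob_space)
    have Ip': "(\<integral>y. p' y \<partial>\<nu>) = 1" using intrho'[of "\<lambda>_. 1"] by (simp add: P'.prob_space)
    define u where "u y = ln (p' y) - ln (p y)" for y
    have um[measurable]: "u \<in> borel_measurable \<nu>" unfolding u_def[abs_def] by measurable
    define h where "h m y = (if p' y = 0 then - real m else max (- real m) (min (real m) (u y)))" for m :: nat and y
    have hm[measurable]: "h m \<in> borel_measurable \<nu>" for m unfolding h_def[abs_def] by measurable
    have hb: "\<bar>h m y\<bar> \<le> real m" for m y by (auto simp: h_def)
    have hb1: "h m y \<le> real m" "- real m \<le> h m y" for m y using hb[of m y] by auto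
    have ih: "integrable \<rho>' (h m)" for m
      by (rule P'.integrable_const_bound[where B="real m"]) (auto simp: hb mr')
    have Zb: "(\<integral>y. exp (h m y) \<partial>\<rho>) \<le> 1 + exp (- real m)" for m
    proof -
      have "(\<integral>y. exp (h m y) \<partial>\<rho>) = (\<integral>y. p y * exp (h m y) \<partial>\<nu>)" by (rule intrho) measurable
      also have "\<dots> \<le> (\<integral>y. p' y + exp (- real m) * p y \<partial>\<nu>)"
      proof (rule integral_mono_AE)
        show "integrable \<nu> (\<lambda>y. p y * exp (h m y))"
        proof (rule Bochner_Integration.integrable_bound[where f="\<lambda>y. exp (real m) * p y"])
          show "integrable \<nu> (\<lambda>y. exp (real m) * p y)" using ip by simp
          show "AE y in \<nu>. norm (p y * exp (h m y)) \<le> norm (exp (real m) * p y)"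
          proof (rule AE_I2)
            fix y
            have "exp (h m y) \<le> exp (real m)" using hb[of m y] by simp
            then show "norm (p y * exp (h m y)) \<le> norm (exp (real m) * p y)"
              using p_nn[of y] by (simp add: mult_left_mono mult.commute)
          qed
        qed measurable
        show "integrable \<nu> (\<lambda>y. p' y + exp (- real m) * p y)" using ip ip' by simp
        show "AE y in \<nu>. p y * exp (h m y) \<le> p' y + exp (- real m) * p y"
          using ppos
        proof eventually_elim
          case (elim y)
          show ?case
          proof (cases "p' y = 0")
            case True then show ?thesis by (simp add: h_def mult.commute)
          next
            case False
            then have p'p: "0 < p' y" using p'_nn[of y] by simp
            have "exp (h m y) \<le> exp (- real m) + exp (u y)"
            proof -
              have "exp (h m y) = max (exp (- real m)) (exp (min (real m) (u y)))"
                using False by (simp add: h_def max_def)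
              also have "\<dots> \<le> exp (- real m) + exp (u y)"
              proof (rule max.boundedI)
                have e1: "exp (min (real m) (u y)) \<le> exp (u y)" by simp
                show "exp (- real m) \<le> exp (- real m) + exp (u y)" using exp_gt_zero[of "u y"] by linarith
                show "exp (min (real m) (u y)) \<le> exp (- real m) + exp (u y)" using e1 exp_gt_zero[of "- real m"] by linarith
              qed
              finally show ?thesis .
            qed
            also have "exp (u y) = p' y / p y" using elim p'p by (simp add: u_def exp_diff)
            finally have "p y * exp (h m y) \<le> p y * (exp (- real m) + p' y / p y)"
              using elim by (simp add: mult_left_mono)
            also have "\<dots> = p' y + exp (- real m) * p y" using elim by (simp add: field_simps)
            finally show ?thesis .
          qed
        qed
      qed
      also have "\<dots> = 1 + exp (- real m)" using ip ip' Ip Ip' by simp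
      finally show ?thesis .
    qed
    have Zlo: "exp (- real m) \<le> (\<integral>y. exp (h m y) \<partial>\<rho>)" for m
    proof -
      have "(\<integral>y. exp (- real m) \<partial>\<rho>) \<le> (\<integral>y. exp (h m y) \<partial>\<rho>)"
      proof (rule integral_mono)
        show "integrable \<rho> (\<lambda>y. exp (h m y))"
          by (rule P.integrable_const_bound[where B="exp (real m)"]) (auto simp: mr hb1)
        show "exp (- real m) \<le> exp (h m y)" for y using hb[of m y] by simp
      qed simp
      then show ?thesis by (simp add: P.prob_space)
    qed
    have em: "exp (- real m) \<le> inverse (real (Suc m))" for m
    proof -
      have "1 + real m \<le> exp (real m)" by (rule exp_ge_add_one_self)
      then have "inverse (exp (real m)) \<le> inverse (1 + real m)" by (rule le_imp_inverse_le) simp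
      then show ?thesis by (simp add: exp_minus)
    qed
    have Hb: "(\<integral>y. h m y \<partial>\<rho>') \<le> t + inverse (real (Suc m))" for m
    proof -
      have Zp: "0 < (\<integral>y. exp (h m y) \<partial>\<rho>)" using Zlo[of m] by (meson exp_gt_zero less_le_trans)
      have "ln (\<integral>y. exp (h m y) \<partial>\<rho>) \<le> ln (1 + exp (- real m))"
        using Zb[of m] Zp by simp
      also have "\<dots> \<le> exp (- real m)" by (rule ln_add_one_self_le_self) simp
      finally have "ln (\<integral>y. exp (h m y) \<partial>\<rho>) \<le> inverse (real (Suc m))" using em[of m] by linarith
      moreover have "(\<integral>y. h m y \<partial>\<rho>') - ln (\<integral>y. exp (h m y) \<partial>\<rho>) \<le> t"
        by (rule DVt[OF hm hb])
      ultimately show ?thesis by linarith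
    qed
    define v where "v y = max 0 (- ln (p' y))" for y
    have vm[measurable]: "v \<in> borel_measurable \<nu>" unfolding v_def[abs_def] by measurable
    have iv: "integrable \<rho>' v"
    proof (subst irho'[OF vm])
      show "integrable \<nu> (\<lambda>y. p' y * v y)"
      proof (rule N.integrable_const_bound[where B=1])
        show "AE y in \<nu>. norm (p' y * v y) \<le> 1"
        proof (rule AE_I2)
          fix y
          have "0 \<le> p' y * v y" using p'_nn[of y] by (simp add: v_def)
          then show "norm (p' y * v y) \<le> 1" using xlnx_bound[OF p'_nn[of y]] by (simp add: v_def)
        qed
      qed measurable
    qed
    define un where "un y = max 0 (- u y)" for y
    have unm[measurable]: "un \<in> borel_measurable \<nu>" unfolding un_def[abs_def] by measurable
    have ilp2: "integrable \<rho>' (\<lambda>y. ln (p y))" using ilp unfolding p_def .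
    have iun: "integrable \<rho>' un"
    proof (rule Bochner_Integration.integrable_bound[where f="\<lambda>y. \<bar>ln (p y)\<bar> + v y"])
      show "integrable \<rho>' (\<lambda>y. \<bar>ln (p y)\<bar> + v y)" using ilp2 iv by auto
      show "AE y in \<rho>'. norm (un y) \<le> norm (\<bar>ln (p y)\<bar> + v y)"
        by (rule AE_I2) (auto simp: un_def v_def u_def)
    qed (simp add: mr')
    define a where "a m y = min (real m) (max 0 (u y))" for m :: nat and y
    have am[measurable]: "a m \<in> borel_measurable \<nu>" for m unfolding a_def[abs_def] by measurable
    have ia: "integrable \<rho>' (a m)" for m
      by (rule P'.integrable_const_bound[where B="real m"]) (auto simp: a_def mr')
    have Ia: "(\<integral>y. a m y \<partial>\<rho>') \<le> t + 1 + (\<integral>y. un y \<partial>\<rho>')" for m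
    proof -
      have "(\<integral>y. a m y \<partial>\<rho>') - (\<integral>y. un y \<partial>\<rho>') = (\<integral>y. a m y - un y \<partial>\<rho>')"
        using ia iun by simp
      also have "\<dots> \<le> (\<integral>y. h m y \<partial>\<rho>')"
      proof (rule integral_mono_AE)
        show "integrable \<rho>' (\<lambda>y. a m y - un y)" using ia iun by simp
        show "integrable \<rho>' (h m)" by (rule ih)
        show "AE y in \<rho>'. a m y - un y \<le> h m y"
          using p'pos by eventually_elim (auto simp: a_def un_def h_def)
      qed
      also have "\<dots> \<le> t + inverse (real (Suc m))" by (rule Hb)
      also have "\<dots> \<le> t + 1" by (simp add: inverse_le_1_iff)
      finally show ?thesis by simp
    qed
    have lim_ev: "(\<lambda>m. f m) \<longlonglongrightarrow> l" if "\<And>m. \<bar>l\<bar> \<le> real m \<Longrightarrow> f m = l" for f :: "nat \<Rightarrow> real" and l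
    proof (rule tendsto_eventually)
      show "\<forall>\<^sub>F m in sequentially. f m = l"
        unfolding eventually_sequentially
      proof (intro exI allI impI)
        fix m assume "nat \<lceil>\<bar>l\<bar>\<rceil> \<le> m"
        then have "\<bar>l\<bar> \<le> real m" by linarith
        then show "f m = l" by (rule that)
      qed
    qed
    have iup: "integrable \<rho>' (\<lambda>y. max 0 (u y))"
    proof -
      have inc: "incseq (\<lambda>m. (\<integral>y. a m y \<partial>\<rho>'))"
        by (intro incseq_SucI integral_mono ia) (auto simp: a_def)
      obtain L where L: "(\<lambda>m. (\<integral>y. a m y \<partial>\<rho>')) \<longlonglongrightarrow> L"
        using incseq_convergent[OF inc] Ia by blast
      show ?thesis
      proof (rule integral_monotone_convergence_nonneg[OF ia _ _ _ L])
        show "AE y in \<rho>'. mono (\<lambda>m. a m y)"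
          by (rule AE_I2) (auto simp: mono_def a_def)
        show "AE y in \<rho>'. 0 \<le> a m y" for m by (rule AE_I2) (auto simp: a_def)
        show "AE y in \<rho>'. (\<lambda>m. a m y) \<longlonglongrightarrow> max 0 (u y)"
          by (rule AE_I2, rule lim_ev) (auto simp: a_def)
      qed (simp add: mr')
    qed
    have iu: "integrable \<rho>' u"
    proof -
      have "integrable \<rho>' (\<lambda>y. max 0 (u y) - un y)" using iup iun by simp
      moreover have "(\<lambda>y. max 0 (u y) - un y) = u" by (auto simp: un_def fun_eq_iff)
      ultimately show ?thesis by simp
    qed
    have ilp': "integrable \<rho>' (\<lambda>y. ln (p' y))"
    proof -
      have "integrable \<rho>' (\<lambda>y. u y + ln (p y))" using iu ilp2 by simp
      moreover have "(\<lambda>y. u y + ln (p y)) = (\<lambda>y. ln (p' y))" by (auto simp: u_def fun_eq_iff)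
      ultimately show ?thesis by simp
    qed
    have RE: "rel_entropy \<nu> \<rho>' = ereal (\<integral>y. ln (p' y) \<partial>\<rho>')"
      using ac' ilp' unfolding rel_entropy_def p'_def by simp
    have eqL: "rel_entropy \<nu> \<rho>' - ereal (\<integral>y. ln (enn2real (RN_deriv \<nu> \<rho> y)) \<partial>\<rho>') = ereal (\<integral>y. u y \<partial>\<rho>')"
    proof -
      have "(\<integral>y. u y \<partial>\<rho>') = (\<integral>y. ln (p' y) \<partial>\<rho>') - (\<integral>y. ln (p y) \<partial>\<rho>')"
        unfolding u_def using ilp' ilp2 by simp
      then show ?thesis unfolding RE p_def by simp
    qed
    have conv: "(\<lambda>m. (\<integral>y. h m y \<partial>\<rho>')) \<longlonglongrightarrow> (\<integral>y. u y \<partial>\<rho>')"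
    proof (rule integral_dominated_convergence[where w="\<lambda>y. \<bar>u y\<bar>"])
      show "integrable \<rho>' (\<lambda>y. \<bar>u y\<bar>)" using iu by simp
      show "AE y in \<rho>'. (\<lambda>m. h m y) \<longlonglongrightarrow> u y"
        using p'pos
      proof eventually_elim
        case (elim y)
        show ?case by (rule lim_ev) (use elim in \<open>auto simp: h_def\<close>)
      qed
      show "AE y in \<rho>'. norm (h m y) \<le> \<bar>u y\<bar>" for m
        using p'pos by eventually_elim (auto simp: h_def)
    qed (simp_all add: mr')
    have "(\<integral>y. u y \<partial>\<rho>') \<le> t + 0"
    proof (rule LIMSEQ_le[OF conv])
      show "(\<lambda>m. t + inverse (real (Suc m))) \<longlonglongrightarrow> t + 0"
        by (intro tendsto_intros LIMSEQ_inverse_real_of_nat)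
      show "\<exists>N. \<forall>n\<ge>N. (\<integral>y. h n y \<partial>\<rho>') \<le> t + inverse (real (Suc n))" using Hb by blast
    qed
    then show ?thesis unfolding eqL real by simp
  qed
qed

locale LS =
  fixes \<mu> :: "'a measure" and \<nu> :: "'b measure" and R :: "('a \<times> 'b) measure"
  assumes mu: "prob_space \<mu>" and nu: "prob_space \<nu>" and sR: "sets R = sets (\<mu> \<Otimes>\<^sub>M \<nu>)"
begin

lemma measR: "measurable R N = measurable (\<mu> \<Otimes>\<^sub>M \<nu>) N"
  by (rule measurable_cong_sets[OF sR refl])

lemma fst_meas[measurable]: "fst \<in> measurable R \<mu>"
  unfolding measR by measurable
lemma snd_meas[measurable]: "snd \<in> measurable R \<nu>"
  unfolding measR by measurable

lemma measD: "measurable (density R f) N = measurable R N"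
  by (rule measurable_cong_sets) auto

lemma fst_measD[measurable]: "fst \<in> measurable (density R f) \<mu>"
  unfolding measD by measurable
lemma snd_measD[measurable]: "snd \<in> measurable (density R f) \<nu>"
  unfolding measD by measurable

lemma marg_one:
  assumes psi[measurable]: "\<psi> \<in> borel_measurable \<nu>" and wd: "phi_plus_wd R \<mu> \<psi>"
  shows "distr (density R (\<lambda>(x,y). ennreal (exp (\<psi> y - phi_plus R \<mu> \<psi> x)))) \<mu> fst = \<mu>"
proof -
  obtain f where f[measurable]: "f \<in> borel_measurable \<mu>"
    and eq: "margX R \<mu> \<psi> = density \<mu> (\<lambda>x. ennreal (exp (f x)))"
    and ae: "AE x in \<mu>. phi_plus R \<mu> \<psi> x = f x"
    using phi_plus_ae[OF mu wd] by blast
  let ?Rp = "density R (\<lambda>(x,y). ennreal (exp (\<psi> y)))"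
  have "density R (\<lambda>(x,y). ennreal (exp (\<psi> y - phi_plus R \<mu> \<psi> x)))
      = density ?Rp (\<lambda>z. ennreal (exp (- phi_plus R \<mu> \<psi> (fst z))))"
    by (subst density_density_eq)
       (auto simp: split_beta' exp_diff ennreal_mult' divide_inverse exp_minus intro!: arg_cong2[where f=density])
  also have "distr \<dots> \<mu> fst = density (distr ?Rp \<mu> fst) (\<lambda>x. ennreal (exp (- phi_plus R \<mu> \<psi> x)))"
    by (rule density_distr[symmetric]) measurable
  also have "distr ?Rp \<mu> fst = density \<mu> (\<lambda>x. ennreal (exp (f x)))"
    using eq unfolding margX_def .
  also have "density (density \<mu> (\<lambda>x. ennreal (exp (f x)))) (\<lambda>x. ennreal (exp (- phi_plus R \<mu> \<psi> x)))
      = density \<mu> (\<lambda>x. ennreal (exp (f x)) * ennreal (exp (- phi_plus R \<mu> \<psi> x)))"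
    by (rule density_density_eq) measurable
  also have "\<dots> = density \<mu> (\<lambda>_. 1)"
    by (rule density_cong) (use ae in \<open>auto simp: ennreal_mult'[symmetric] exp_minus\<close>)
  finally show ?thesis by (simp add: density_1)
qed


definition Pm :: "('b \<Rightarrow> real) \<Rightarrow> ('a \<times> 'b) measure" where
  "Pm \<phi> = density R (\<lambda>(x,y). ennreal (exp (\<phi> y - phi_plus R \<mu> \<phi> x)))"

lemma measP: "measurable (Pm \<phi>) N = measurable R N"
  unfolding Pm_def by (rule measD)
lemma fst_measP[measurable]: "fst \<in> measurable (Pm \<phi>) \<mu>"
  unfolding measP by measurable
lemma snd_measP[measurable]: "snd \<in> measurable (Pm \<phi>) \<nu>"
  unfolding measP by measurable
lemma space_P: "space (Pm \<phi>) = space R"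
  unfolding Pm_def by simp

lemma dens_P:
  assumes [measurable]: "\<phi> \<in> borel_measurable \<nu>" "h \<in> borel_measurable R"
  shows "density (Pm \<phi>) (\<lambda>z. ennreal (exp (h z))) =
    density R (\<lambda>z. ennreal (exp (\<phi> (snd z) - phi_plus R \<mu> \<phi> (fst z) + h z)))"
  unfolding Pm_def
  by (subst density_density_eq) (auto simp: split_beta' exp_add ennreal_mult' intro!: arg_cong2[where f=density])

lemma P_fst:
  assumes [measurable]: "\<phi> \<in> borel_measurable \<nu>" and wd: "phi_plus_wd R \<mu> \<phi>"
  shows "distr (Pm \<phi>) \<mu> fst = \<mu>"
  unfolding Pm_def by (rule marg_one[OF assms])

lemma P_prob:
  assumes [measurable]: "\<phi> \<in> borel_measurable \<nu>" and wd: "phi_plus_wd R \<mu> \<phi>"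
  shows "prob_space (Pm \<phi>)"
proof
  have "emeasure (Pm \<phi>) (space (Pm \<phi>)) = emeasure (distr (Pm \<phi>) \<mu> fst) (space \<mu>)"
    by (subst emeasure_distr) (auto simp: space_P measR[symmetric] intro!: arg_cong2[where f=emeasure] dest: measurable_space[OF fst_meas])
  also have "\<dots> = 1" using P_fst[OF assms] prob_space.emeasure_space_1[OF mu] by simp
  finally show "emeasure (Pm \<phi>) (space (Pm \<phi>)) = 1" .
qed

lemma gibbs:
  assumes F0: "Fdom R \<mu> \<nu> \<phi>0" and D0: "Fderiv R \<mu> \<nu> \<phi>0 = \<rho>" and i0: "integrable \<rho> \<phi>0"
    and F1: "Fdom R \<mu> \<nu> \<psi>" and i1: "integrable \<rho> \<psi>"
  shows "(\<integral>y. \<psi> y \<partial>\<rho>) - Ffun R \<mu> \<psi> \<le> (\<integral>y. \<phi>0 y \<partial>\<rho>) - Ffun R \<mu> \<phi>0"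
proof -
  have m0[measurable]: "\<phi>0 \<in> borel_measurable \<nu>" and wd0: "phi_plus_wd R \<mu> \<phi>0"
    and ip0: "integrable \<mu> (phi_plus R \<mu> \<phi>0)" using F0 by (auto simp: Fdom_def)
  have m1[measurable]: "\<psi> \<in> borel_measurable \<nu>" and wd1: "phi_plus_wd R \<mu> \<psi>"
    and ip1: "integrable \<mu> (phi_plus R \<mu> \<psi>)" using F1 by (auto simp: Fdom_def)
  let ?P = "Pm \<phi>0"
  interpret P: prob_space ?P by (rule P_prob[OF m0 wd0])
  have Pfst: "distr ?P \<mu> fst = \<mu>" by (rule P_fst[OF m0 wd0])
  have Psnd: "distr ?P \<nu> snd = \<rho>" using D0 unfolding Fderiv_def Pm_def .
  define w where "w z = \<psi> (snd z) - \<phi>0 (snd z) - phi_plus R \<mu> \<psi> (fst z) + phi_plus R \<mu> \<phi>0 (fst z)" for z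
  have wm[measurable]: "w \<in> borel_measurable R" unfolding w_def by measurable
  have isnd: "integrable ?P (\<lambda>z. f (snd z))" if "integrable \<rho> f" "f \<in> borel_measurable \<nu>" for f :: "'b \<Rightarrow> real"
    using that integrable_distr_eq[of snd ?P \<nu> f] Psnd by simp
  have ifst: "integrable ?P (\<lambda>z. f (fst z))" if "integrable \<mu> f" "f \<in> borel_measurable \<mu>" for f :: "'a \<Rightarrow> real"
    using that integrable_distr_eq[of fst ?P \<mu> f] Pfst by simp
  have Isnd: "(\<integral>z. f (snd z) \<partial>?P) = (\<integral>y. f y \<partial>\<rho>)" if "f \<in> borel_measurable \<nu>" for f :: "'b \<Rightarrow> real"
    using that integral_distr[of snd ?P \<nu> f] Psnd by simp
  have Ifst: "(\<integral>z. f (fst z) \<partial>?P) = (\<integral>x. f x \<partial>\<mu>)" if "f \<in> borel_measurable \<mu>" for f :: "'a \<Rightarrow> real"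
    using that integral_distr[of fst ?P \<mu> f] Pfst by simp
  have a1: "integrable ?P (\<lambda>z. \<psi> (snd z))" by (rule isnd[OF i1 m1])
  have a2: "integrable ?P (\<lambda>z. \<phi>0 (snd z))" by (rule isnd[OF i0 m0])
  have a3: "integrable ?P (\<lambda>z. phi_plus R \<mu> \<psi> (fst z))" by (rule ifst[OF ip1]) measurable
  have a4: "integrable ?P (\<lambda>z. phi_plus R \<mu> \<phi>0 (fst z))" by (rule ifst[OF ip0]) measurable
  have iw: "integrable ?P w" unfolding w_def using a1 a2 a3 a4 by auto
  have Iw: "(\<integral>z. w z \<partial>?P) = (\<integral>y. \<psi> y \<partial>\<rho>) - (\<integral>y. \<phi>0 y \<partial>\<rho>) - Ffun R \<mu> \<psi> + Ffun R \<mu> \<phi>0"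
    unfolding w_def Ffun_def using a1 a2 a3 a4
    by (simp add: Bochner_Integration.integral_add Bochner_Integration.integral_diff Isnd Ifst)
  have dw: "density ?P (\<lambda>z. ennreal (exp (w z))) = Pm \<psi>"
    apply (subst dens_P[OF m0 wm]) unfolding Pm_def w_def split_beta'
    by (rule arg_cong[where f="density R"]) (simp add: fun_eq_iff)
  have nw: "(\<integral>\<^sup>+z. ennreal (exp (w z)) \<partial>?P) = 1"
  proof -
    have "(\<integral>\<^sup>+z. ennreal (exp (w z)) \<partial>?P) = emeasure (density ?P (\<lambda>z. ennreal (exp (w z)))) (space ?P)"
      by (subst emeasure_density) (auto simp: measP)
    also have "\<dots> = emeasure (Pm \<psi>) (space (Pm \<psi>))" unfolding dw by (simp add: space_P)
    also have "\<dots> = 1" using prob_space.emeasure_space_1[OF P_prob[OF m1 wd1]] .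
    finally show ?thesis .
  qed
  have iew: "integrable ?P (\<lambda>z. exp (w z))"
    by (rule integrableI_bounded) (auto simp: measP nw)
  have Iew: "(\<integral>z. exp (w z) \<partial>?P) = 1"
    by (subst integral_eq_nn_integral) (auto simp: measP nw)
  have "(\<integral>z. w z \<partial>?P) \<le> (\<integral>z. exp (w z) - 1 \<partial>?P)"
  proof (rule integral_mono[OF iw])
    show "integrable ?P (\<lambda>z. exp (w z) - 1)" using iew by auto
    show "w z \<le> exp (w z) - 1" for z using exp_ge_add_one_self[of "w z"] by linarith
  qed
  also have "\<dots> = 0" using iew Iew by (simp add: Bochner_Integration.integral_diff P.prob_space)
  finally show ?thesis using Iw by simp
qed


lemma perturb:
  assumes F0: "Fdom R \<mu> \<nu> \<phi>0" and D0: "Fderiv R \<mu> \<nu> \<phi>0 = \<rho>"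
    and gm[measurable]: "g \<in> borel_measurable \<nu>" and gb: "\<And>y. \<bar>g y\<bar> \<le> c"
  shows "Fdom R \<mu> \<nu> (\<lambda>y. \<phi>0 y + g y) \<and>
    Ffun R \<mu> (\<lambda>y. \<phi>0 y + g y) \<le> Ffun R \<mu> \<phi>0 + ln (\<integral>y. exp (g y) \<partial>\<rho>)"
proof -
  have m0[measurable]: "\<phi>0 \<in> borel_measurable \<nu>" and wd0: "phi_plus_wd R \<mu> \<phi>0"
    and ip0: "integrable \<mu> (phi_plus R \<mu> \<phi>0)" using F0 by (auto simp: Fdom_def)
  let ?P = "Pm \<phi>0"
  interpret P: prob_space ?P by (rule P_prob[OF m0 wd0])
  interpret M: prob_space \<mu> by (rule mu)
  have Pfst: "distr ?P \<mu> fst = \<mu>" by (rule P_fst[OF m0 wd0])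
  have Psnd: "distr ?P \<nu> snd = \<rho>" using D0 unfolding Fderiv_def Pm_def .
  interpret Rho: prob_space \<rho> unfolding Psnd[symmetric] by (rule P.prob_space_distr) measurable
  have sRho: "sets \<rho> = sets \<nu>" unfolding Psnd[symmetric] by simp
  have gle: "exp (g y) \<le> exp c" for y using gb[of y] by simp
  have gge: "exp (- c) \<le> exp (g y)" for y using gb[of y] by simp
  have gb1: "g y \<le> c" "- c \<le> g y" for y using gb[of y] by auto
  define G where "G = density ?P (\<lambda>z. ennreal (exp (g (snd z))))"
  define Q where "Q = distr G \<mu> fst"
  have measG: "measurable G N = measurable ?P N" for N :: "'c measure"
    unfolding G_def by (rule measurable_cong_sets) auto
  have fstG[measurable]: "fst \<in> measurable G \<mu>" unfolding measG by measurable
  have spG: "space G = space ?P" unfolding G_def by simp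
  have spfst: "a \<in> space \<mu>" if "(a, b) \<in> space ?P" for a b
    using measurable_space[OF fst_measP that] by simp
  have Qsets: "sets Q = sets \<mu>" by (simp add: Q_def)
  have pre: "fst -` A \<inter> space ?P \<in> sets ?P" if "A \<in> sets \<mu>" for A
    using measurable_sets[OF fst_measP that] .
  have Qeq: "emeasure Q A = (\<integral>\<^sup>+z. ennreal (exp (g (snd z))) * indicator (fst -` A \<inter> space ?P) z \<partial>?P)"
    if A: "A \<in> sets \<mu>" for A
    unfolding Q_def G_def using A pre[OF A]
    by (simp add: emeasure_distr[OF fstG[unfolded G_def]] emeasure_density measP)
  have muA: "emeasure \<mu> A = (\<integral>\<^sup>+z. indicator (fst -` A \<inter> space ?P) z \<partial>?P)" if A: "A \<in> sets \<mu>" for A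
  proof -
    have "emeasure \<mu> A = emeasure (distr ?P \<mu> fst) A" using Pfst by simp
    also have "\<dots> = emeasure ?P (fst -` A \<inter> space ?P)" using A by (simp add: emeasure_distr)
    finally show ?thesis using pre[OF A] by simp
  qed
  have Qle: "emeasure Q A \<le> ennreal (exp c) * emeasure \<mu> A" if A: "A \<in> sets \<mu>" for A
  proof -
    have "emeasure Q A \<le> (\<integral>\<^sup>+z. ennreal (exp c) * indicator (fst -` A \<inter> space ?P) z \<partial>?P)"
      unfolding Qeq[OF A] by (rule nn_integral_mono) (auto simp: gb1 indicator_def)
    also have "\<dots> = ennreal (exp c) * emeasure \<mu> A"
      using A pre[OF A] by (simp add: muA nn_integral_cmult)
    finally show ?thesis .
  qed
  have Qge: "ennreal (exp (- c)) * emeasure \<mu> A \<le> emeasure Q A" if A: "A \<in> sets \<mu>" for A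
  proof -
    have "ennreal (exp (- c)) * emeasure \<mu> A = (\<integral>\<^sup>+z. ennreal (exp (- c)) * indicator (fst -` A \<inter> space ?P) z \<partial>?P)"
      using A pre[OF A] by (simp add: muA nn_integral_cmult)
    also have "\<dots> \<le> emeasure Q A"
      unfolding Qeq[OF A] by (rule nn_integral_mono) (auto simp: gb1 indicator_def)
    finally show ?thesis .
  qed
  have ac: "absolutely_continuous \<mu> Q"
    unfolding absolutely_continuous_def
  proof
    fix A assume "A \<in> null_sets \<mu>"
    then have A: "A \<in> sets \<mu>" "emeasure \<mu> A = 0" by auto
    then have "emeasure Q A \<le> 0" using Qle[OF A(1)] by simp
    then show "A \<in> null_sets Q" using A Qsets by auto
  qed
  define k where "k = RN_deriv \<mu> Q"
  have km[measurable]: "k \<in> borel_measurable \<mu>" unfolding k_def by simp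
  have dk: "density \<mu> k = Q" unfolding k_def by (rule M.density_RN_deriv[OF ac Qsets])
  have kup: "AE x in \<mu>. k x \<le> ennreal (exp c)"
    by (rule ae_le_of_dens[OF M.finite_measure_axioms km]) (simp add: dk Qle)
  have klo: "AE x in \<mu>. ennreal (exp (- c)) \<le> k x"
    by (rule ae_ge_of_dens[OF M.finite_measure_axioms km]) (simp add: dk Qge)
  define kq where "kq x = enn2real (k x)" for x
  have kq_nn: "0 \<le> kq x" for x by (simp add: kq_def)
  have kqm[measurable]: "kq \<in> borel_measurable \<mu>" unfolding kq_def[abs_def] by measurable
  have kq_ae: "AE x in \<mu>. exp (- c) \<le> kq x \<and> kq x \<le> exp c \<and> k x = ennreal (kq x)"
    using kup klo
  proof eventually_elim
    case (elim x)
    have "k x \<noteq> \<top>" using elim(1) by (metis ennreal_neq_top top_unique)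
    then obtain r where r: "k x = ennreal r" "0 \<le> r" by (cases "k x") auto
    have kqr: "kq x = r" using r by (simp add: kq_def)
    have "exp (- c) \<le> r" using elim(2) r by (simp add: ennreal_le_iff)
    moreover have "r \<le> exp c" using elim(1) r by (simp add: ennreal_le_iff)
    ultimately show ?case using kqr r by simp
  qed
  have hm[measurable]: "(\<lambda>z. g (snd z) + phi_plus R \<mu> \<phi>0 (fst z)) \<in> borel_measurable R" by measurable
  define f where "f x = ln (kq x) + phi_plus R \<mu> \<phi>0 x" for x
  have fm[measurable]: "f \<in> borel_measurable \<mu>" unfolding f_def[abs_def] by measurable
  have margeq: "margX R \<mu> (\<lambda>y. \<phi>0 y + g y) = density \<mu> (\<lambda>x. ennreal (exp (f x)))"
  proof -
    have "density R (\<lambda>(x,y). ennreal (exp (\<phi>0 y + g y)))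
        = density ?P (\<lambda>z. ennreal (exp (g (snd z) + phi_plus R \<mu> \<phi>0 (fst z))))"
      unfolding dens_P[OF m0 hm] split_beta'
      by (rule arg_cong[where f="density R"]) (simp add: fun_eq_iff)
    also have "\<dots> = density G (\<lambda>z. ennreal (exp (phi_plus R \<mu> \<phi>0 (fst z))))"
      unfolding G_def
      by (subst density_density_eq) (auto simp: measP exp_add ennreal_mult')
    finally have "distr (density R (\<lambda>(x,y). ennreal (exp (\<phi>0 y + g y)))) \<mu> fst
        = distr (density G (\<lambda>z. ennreal (exp (phi_plus R \<mu> \<phi>0 (fst z))))) \<mu> fst" by simp
    also have "\<dots> = density Q (\<lambda>x. ennreal (exp (phi_plus R \<mu> \<phi>0 x)))"
      unfolding Q_def by (rule density_distr[symmetric]) measurable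
    also have "\<dots> = density \<mu> (\<lambda>x. k x * ennreal (exp (phi_plus R \<mu> \<phi>0 x)))"
      unfolding dk[symmetric] by (rule density_density_eq) measurable
    also have "\<dots> = density \<mu> (\<lambda>x. ennreal (exp (f x)))"
    proof (rule density_cong)
      show "AE x in \<mu>. k x * ennreal (exp (phi_plus R \<mu> \<phi>0 x)) = ennreal (exp (f x))"
        using kq_ae
      proof eventually_elim
        case (elim x)
        have "0 < kq x" using elim by (meson exp_gt_zero less_le_trans)
        then show ?case using elim by (simp add: f_def exp_add ennreal_mult')
      qed
    qed measurable
    finally show ?thesis unfolding margX_def .
  qed
  have wd: "phi_plus_wd R \<mu> (\<lambda>y. \<phi>0 y + g y)" unfolding phi_plus_wd_def using margeq fm by blast
  have ppae: "AE x in \<mu>. phi_plus R \<mu> (\<lambda>y. \<phi>0 y + g y) x = f x"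
    by (rule phi_plus_ae2[OF mu fm margeq])
  have lnb: "AE x in \<mu>. norm (ln (kq x)) \<le> c"
    using kq_ae
  proof eventually_elim
    case (elim x)
    have p: "0 < kq x" using elim by (meson exp_gt_zero less_le_trans)
    have "ln (kq x) \<le> c" using elim p by (metis ln_exp ln_le_cancel_iff exp_gt_zero)
    moreover have "- c \<le> ln (kq x)" using elim p by (metis ln_exp ln_le_cancel_iff exp_gt_zero)
    ultimately show ?case by auto
  qed
  have ilk: "integrable \<mu> (\<lambda>x. ln (kq x))"
    by (rule M.integrable_const_bound[OF lnb]) measurable
  have ikq: "integrable \<mu> kq"
    by (rule M.integrable_const_bound[where B="exp c"]) (use kq_ae in \<open>auto intro: eventually_mono[OF kq_ae] simp: kq_def\<close>)
  have iff: "integrable \<mu> f" using ilk ip0 unfolding f_def by auto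
  have ipp: "integrable \<mu> (phi_plus R \<mu> (\<lambda>y. \<phi>0 y + g y))"
    using iff integrable_cong_AE[OF phi_plus_meas fm ppae] by simp
  have Fd: "Fdom R \<mu> \<nu> (\<lambda>y. \<phi>0 y + g y)" unfolding Fdom_def using wd ipp by auto
  have Ff: "Ffun R \<mu> (\<lambda>y. \<phi>0 y + g y) = (\<integral>x. ln (kq x) \<partial>\<mu>) + Ffun R \<mu> \<phi>0"
  proof -
    have "Ffun R \<mu> (\<lambda>y. \<phi>0 y + g y) = (\<integral>x. f x \<partial>\<mu>)"
      unfolding Ffun_def by (rule integral_cong_AE) (use ppae in auto)
    also have "\<dots> = (\<integral>x. ln (kq x) \<partial>\<mu>) + Ffun R \<mu> \<phi>0"
      unfolding f_def Ffun_def using ilk ip0 by simp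
    finally show ?thesis .
  qed
  define Z where "Z = (\<integral>y. exp (g y) \<partial>\<rho>)"
  have Zeq: "(\<integral>x. kq x \<partial>\<mu>) = Z"
  proof -
    have "(\<integral>\<^sup>+x. ennreal (kq x) \<partial>\<mu>) = (\<integral>\<^sup>+x. k x \<partial>\<mu>)"
      by (rule nn_integral_cong_AE, rule eventually_mono[OF kq_ae]) auto
    also have "\<dots> = emeasure Q (space \<mu>)"
      unfolding dk[symmetric] by (subst emeasure_density) (auto intro!: nn_integral_cong)
    also have "\<dots> = emeasure G (space G)"
      unfolding Q_def by (subst emeasure_distr) (auto simp: spG spfst intro!: arg_cong2[where f=emeasure])
    also have "\<dots> = (\<integral>\<^sup>+z. ennreal (exp (g (snd z))) \<partial>?P)"
      unfolding G_def by (subst emeasure_density) (auto simp: measP intro!: nn_integral_cong)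
    also have "\<dots> = (\<integral>\<^sup>+y. ennreal (exp (g y)) \<partial>\<rho>)"
      unfolding Psnd[symmetric] by (subst nn_integral_distr) auto
    finally have e: "(\<integral>\<^sup>+x. ennreal (kq x) \<partial>\<mu>) = (\<integral>\<^sup>+y. ennreal (exp (g y)) \<partial>\<rho>)" .
    show ?thesis unfolding Z_def
      by (subst (1 2) integral_eq_nn_integral) (auto simp: e kq_nn measurable_cong_sets[OF sRho refl])
  qed
  have ieg: "integrable \<rho> (\<lambda>y. exp (g y))"
    by (rule Rho.integrable_const_bound[where B="exp c"]) (auto simp: gb1 measurable_cong_sets[OF sRho refl])
  have Zlo: "exp (- c) \<le> Z"
  proof -
    have "(\<integral>y. exp (- c) \<partial>\<rho>) \<le> Z" unfolding Z_def
      by (rule integral_mono[OF _ ieg]) (auto simp: gb1)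
    then show ?thesis by (simp add: Rho.prob_space)
  qed
  have Zpos: "0 < Z" using Zlo by (meson exp_gt_zero less_le_trans)
  have "(\<integral>x. ln (kq x) \<partial>\<mu>) \<le> (\<integral>x. kq x / Z - 1 + ln Z \<partial>\<mu>)"
  proof (rule integral_mono_AE[OF ilk])
    show "integrable \<mu> (\<lambda>x. kq x / Z - 1 + ln Z)" using ikq by auto
    show "AE x in \<mu>. ln (kq x) \<le> kq x / Z - 1 + ln Z"
      using kq_ae
    proof eventually_elim
      case (elim x)
      have p: "0 < kq x" using elim by (meson exp_gt_zero less_le_trans)
      have "ln (kq x / Z) \<le> kq x / Z - 1" by (rule ln_le_minus_one) (use p Zpos in auto)
      then show ?case using p Zpos by (simp add: ln_div)
    qed
  qed
  also have "\<dots> = ln Z" using ikq Zeq Zpos by (simp add: M.prob_space)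
  finally show ?thesis using Fd Ff unfolding Z_def by simp
qed

end

theorem lemma3p6:
  fixes \<mu> :: "'a measure" and \<nu> :: "'b measure" and R :: "('a \<times> 'b) measure"
    and \<rho> \<rho>' :: "'b measure"
  assumes "prob_space \<mu>" and "prob_space \<nu>"
    and "sets R = sets (\<mu> \<Otimes>\<^sub>M \<nu>)"
    and "prob_space \<rho>" and "sets \<rho> = sets \<nu>"
    and "prob_space \<rho>'" and "sets \<rho>' = sets \<nu>"
    \<comment> \<open>H_nu is differentiable at rho and its Bregman divergence is defined\<close>
    and "absolutely_continuous \<nu> \<rho>"
    and "AE y in \<nu>. 0 < RN_deriv \<nu> \<rho> y"
    and "rel_entropy \<nu> \<rho> < \<infinity>"
    and "integrable \<rho>' (rel_entropy_deriv \<nu> \<rho>)"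
    \<comment> \<open>F^* is differentiable at rho (rho lies in the range of F') and its Bregman divergence is defined\<close>
    and "\<exists>\<phi>. Fdom R \<mu> \<nu> \<phi> \<and> integrable \<rho> \<phi> \<and> Fderiv R \<mu> \<nu> \<phi> = \<rho>"
    and "\<And>\<phi>. Fdom R \<mu> \<nu> \<phi> \<Longrightarrow> integrable \<rho> \<phi> \<Longrightarrow> Fderiv R \<mu> \<nu> \<phi> = \<rho> \<Longrightarrow> integrable \<rho>' \<phi>"
  shows "bregman (rel_entropy \<nu>) (rel_entropy_deriv \<nu>) \<rho>' \<rho>
           \<le> bregman (Fstar R \<mu> \<nu>) (Fstar_deriv R \<mu> \<nu>) \<rho>' \<rho>"
proof -
  interpret LS \<mu> \<nu> R using assms(1-3) by (rule LS.intro)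
  define \<phi>s where "\<phi>s = Fstar_deriv R \<mu> \<nu> \<rho>"
  have \<phi>s: "Fdom R \<mu> \<nu> \<phi>s \<and> integrable \<rho> \<phi>s \<and> Fderiv R \<mu> \<nu> \<phi>s = \<rho>"
    unfolding \<phi>s_def Fstar_deriv_def by (rule someI_ex[OF assms(12)])
  then have F0: "Fdom R \<mu> \<nu> \<phi>s" and i0: "integrable \<rho> \<phi>s" and D0: "Fderiv R \<mu> \<nu> \<phi>s = \<rho>" by auto
  have i0': "integrable \<rho>' \<phi>s" using assms(13) F0 i0 D0 by blast
  interpret P': prob_space \<rho>' by (rule assms(6))
  interpret P: prob_space \<rho> by (rule assms(4))
  have mr'[measurable]: "measurable \<rho>' M = measurable \<nu> M" for M :: "'c measure"
    by (rule measurable_cong_sets[OF assms(7) refl])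
  define c where "c = (\<integral>y. \<phi>s y \<partial>\<rho>) - Ffun R \<mu> \<phi>s"
  have Frho: "Fstar R \<mu> \<nu> \<rho> = ereal c"
    unfolding Fstar_def
  proof (rule antisym)
    show "(SUP \<psi>\<in>{\<phi>. Fdom R \<mu> \<nu> \<phi> \<and> integrable \<rho> \<phi>}. ereal ((\<integral>y. \<psi> y \<partial>\<rho>) - Ffun R \<mu> \<psi>)) \<le> ereal c"
      by (rule SUP_least) (auto simp: c_def intro!: gibbs[OF F0 D0 i0])
    show "ereal c \<le> (SUP \<psi>\<in>{\<phi>. Fdom R \<mu> \<nu> \<phi> \<and> integrable \<rho> \<phi>}. ereal ((\<integral>y. \<psi> y \<partial>\<rho>) - Ffun R \<mu> \<psi>))"
      by (rule SUP_upper2[where i=\<phi>s]) (auto simp: c_def F0 i0)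
  qed
  define c' where "c' = (\<integral>y. \<phi>s y \<partial>\<rho>') - Ffun R \<mu> \<phi>s"
  have DVb: "ereal ((\<integral>y. g y \<partial>\<rho>') - ln (\<integral>y. exp (g y) \<partial>\<rho>)) \<le> Fstar R \<mu> \<nu> \<rho>' - ereal c'"
    if gm[measurable]: "g \<in> borel_measurable \<nu>" and gb: "\<And>y. \<bar>g y\<bar> \<le> b" for g b
  proof -
    have pt: "Fdom R \<mu> \<nu> (\<lambda>y. \<phi>s y + g y) \<and>
      Ffun R \<mu> (\<lambda>y. \<phi>s y + g y) \<le> Ffun R \<mu> \<phi>s + ln (\<integral>y. exp (g y) \<partial>\<rho>)"
      by (rule perturb[OF F0 D0 gm gb])
    have ig: "integrable \<rho>' g"
      by (rule P'.integrable_const_bound[where B=b]) (auto simp: gb mr')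
    have ipg: "integrable \<rho>' (\<lambda>y. \<phi>s y + g y)" using i0' ig by simp
    have sup: "ereal ((\<integral>y. \<phi>s y + g y \<partial>\<rho>') - Ffun R \<mu> (\<lambda>y. \<phi>s y + g y)) \<le> Fstar R \<mu> \<nu> \<rho>'"
      unfolding Fstar_def by (rule SUP_upper) (use pt ipg in auto)
    have sp: "(\<integral>y. \<phi>s y + g y \<partial>\<rho>') = (\<integral>y. \<phi>s y \<partial>\<rho>') + (\<integral>y. g y \<partial>\<rho>')"
      using i0' ig by simp
    have le: "c' + ((\<integral>y. g y \<partial>\<rho>') - ln (\<integral>y. exp (g y) \<partial>\<rho>))
        \<le> (\<integral>y. \<phi>s y + g y \<partial>\<rho>') - Ffun R \<mu> (\<lambda>y. \<phi>s y + g y)"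
      using pt sp unfolding c'_def by linarith
    have "ereal (c' + ((\<integral>y. g y \<partial>\<rho>') - ln (\<integral>y. exp (g y) \<partial>\<rho>))) \<le> Fstar R \<mu> \<nu> \<rho>'"
      using order_trans[OF le[folded ereal_less_eq(3)] sup] .
    then show ?thesis by (rule ereal_aux1)
  qed
  have main: "rel_entropy \<nu> \<rho>' - ereal (\<integral>y. ln (enn2real (RN_deriv \<nu> \<rho> y)) \<partial>\<rho>') \<le> Fstar R \<mu> \<nu> \<rho>' - ereal c'"
  proof (rule dv[OF assms(2,4,5,6,7,8,9)])
    show "integrable \<rho>' (\<lambda>y. ln (enn2real (RN_deriv \<nu> \<rho> y)))"
    proof -
      have "integrable \<rho>' (\<lambda>y. rel_entropy_deriv \<nu> \<rho> y - 1)" using assms(11) by simp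
      then show ?thesis by (simp add: rel_entropy_deriv_def)
    qed
    show "ereal ((\<integral>y. g y \<partial>\<rho>') - ln (\<integral>y. exp (g y) \<partial>\<rho>)) \<le> Fstar R \<mu> \<nu> \<rho>' - ereal c'"
      if "g \<in> borel_measurable \<nu>" "\<And>y. \<bar>g y\<bar> \<le> b" for g b using DVb[OF that] .
  qed
  have reL: "rel_entropy \<nu> \<rho> \<noteq> \<infinity>" using assms(10) by simp
  then have cond: "integrable \<rho> (\<lambda>y. ln (enn2real (RN_deriv \<nu> \<rho> y)))"
    and RE: "rel_entropy \<nu> \<rho> = ereal (\<integral>y. ln (enn2real (RN_deriv \<nu> \<rho> y)) \<partial>\<rho>)"
    unfolding rel_entropy_def by (auto split: if_splits)
  have ilp': "integrable \<rho>' (\<lambda>y. ln (enn2real (RN_deriv \<nu> \<rho> y)))"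
  proof -
    have "integrable \<rho>' (\<lambda>y. rel_entropy_deriv \<nu> \<rho> y - 1)" using assms(11) by simp
    then show ?thesis by (simp add: rel_entropy_deriv_def)
  qed
  have d1: "(\<integral>y. rel_entropy_deriv \<nu> \<rho> y \<partial>\<rho>') = (\<integral>y. ln (enn2real (RN_deriv \<nu> \<rho> y)) \<partial>\<rho>') + 1"
    unfolding rel_entropy_deriv_def using ilp' by (simp add: P'.prob_space)
  have d2: "(\<integral>y. rel_entropy_deriv \<nu> \<rho> y \<partial>\<rho>) = (\<integral>y. ln (enn2real (RN_deriv \<nu> \<rho> y)) \<partial>\<rho>) + 1"
    unfolding rel_entropy_deriv_def using cond by (simp add: P.prob_space)
  have lhs: "bregman (rel_entropy \<nu>) (rel_entropy_deriv \<nu>) \<rho>' \<rho>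
      = rel_entropy \<nu> \<rho>' - ereal (\<integral>y. ln (enn2real (RN_deriv \<nu> \<rho> y)) \<partial>\<rho>')"
    unfolding bregman_def RE d1 d2 by (rule ereal_aux2)
  have rhs: "bregman (Fstar R \<mu> \<nu>) (Fstar_deriv R \<mu> \<nu>) \<rho>' \<rho> = Fstar R \<mu> \<nu> \<rho>' - ereal c'"
    unfolding bregman_def Frho \<phi>s_def[symmetric] c_def c'_def by (rule ereal_aux3)
  show ?thesis unfolding lhs rhs by (rule main)
qed

end
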